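(* Let $\boldsymbol X \in \mathbb{R}^{n\times d}$, $\boldsymbol y \in \mathbb{R}^n$, $\boldsymbol M = \boldsymbol X^\top \boldsymbol X$, $\boldsymbol r = \boldsymbol X^\top \boldsymbol y$. Assume (A1) $\boldsymbol r > \mathbf 0$ and (A2) $M_{ij}\le 0$ for all $i\neq j$. Let $\boldsymbol C>\mathbf 0$, $\boldsymbol k>\mathbf 0$ in $\mathbb{R}^d$, and for $\varepsilon>0$ let $\boldsymbol\theta^{(\varepsilon)}(t)$ solve $$\frac{\mathrm d \theta_i}{\mathrm d t} = \theta_i\Big(r_i - \sum_{j=1}^d M_{ij}\theta_j\Big),\quad i=1,\dots,d,$$ with $\boldsymbol\theta^{(\varepsilon)}(0) = (C_1\varepsilon^{k_1},\dots,C_d\varepsilon^{k_d})$. Then there exists $B>0$ such that $\Vert\boldsymbol\theta^{(\varepsilon)}(t)\Vert\le B$ for all $\varepsilon\in(0,1]$ and all $t\ge 0$.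
   Context: Vector inequalities are coordinatewise; $\Vert\cdot\Vert$ is the Euclidean norm. *)

theory Defs
  imports "HOL-Analysis.Analysis"
begin

end

theory Submission
  imports Defs
begin

lemma coerc:
  fixes X :: "real ^ 'd ^ 'n" and y :: "real ^ 'n"
  assumes rpos: "\<forall>i. (transpose X *v y) $ i > 0"
  shows "\<exists>\<delta>>0. \<forall>v. (\<forall>i. 0 \<le> v $ i) \<longrightarrow> \<delta> * (norm v)^2 \<le> (X *v v) \<bullet> (X *v v)"
proof -
  define S where "S = {v::real^'d. (\<forall>i. 0 \<le> v $ i) \<and> norm v = 1}"
  have "closed S" unfolding S_def
    by (intro closed_Collect_conj closed_Collect_all closed_Collect_le closed_Collect_eq continuous_intros)
  moreover have "bounded S" unfolding S_def bounded_iff by auto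
  ultimately have cS: "compact S" by (simp add: compact_eq_bounded_closed)
  obtain i0 :: 'd where True by blast
  have "axis i0 1 \<in> S" unfolding S_def by (auto simp: axis_def norm_axis_1[unfolded axis_def])
  hence ne: "S \<noteq> {}" by auto
  have "continuous_on S (\<lambda>v. (X *v v) \<bullet> (X *v v))" by (intro continuous_intros)
  from continuous_attains_inf[OF cS ne this] obtain v0 where v0: "v0 \<in> S"
    and min: "\<And>w. w \<in> S \<Longrightarrow> (X *v v0) \<bullet> (X *v v0) \<le> (X *v w) \<bullet> (X *v w)" by blast
  define \<delta> where "\<delta> = (X *v v0) \<bullet> (X *v v0)"
  have "\<delta> > 0"
  proof (rule ccontr)
    assume "\<not> \<delta> > 0"
    hence "\<delta> = 0" unfolding \<delta>_def using inner_ge_zero[of "X *v v0"] by linarith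
    hence X0: "X *v v0 = 0" unfolding \<delta>_def by simp
    have "(transpose X *v y) \<bullet> v0 = y \<bullet> (X *v v0)"
      by (simp add: dot_lmul_matrix)
    hence z: "(transpose X *v y) \<bullet> v0 = 0" using X0 by simp
    have "v0 \<noteq> 0" using v0 unfolding S_def by auto
    then obtain j where j: "v0 $ j \<noteq> 0" by (auto simp: vec_eq_iff)
    have nn: "\<forall>i. 0 \<le> v0 $ i" using v0 unfolding S_def by auto
    have "0 < (\<Sum>i\<in>UNIV. (transpose X *v y) $ i * v0 $ i)"
    proof (rule sum_pos2[of UNIV j])
      show "0 < (transpose X *v y) $ j * v0 $ j" using j nn rpos by (metis less_le mult_pos_pos)
      show "\<And>i. i \<in> UNIV \<Longrightarrow> 0 \<le> (transpose X *v y) $ i * v0 $ i"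
        using nn rpos by (simp add: less_imp_le)
    qed auto
    thus False using z by (simp add: inner_vec_def)
  qed
  moreover have "\<delta> * (norm v)^2 \<le> (X *v v) \<bullet> (X *v v)" if nv: "\<forall>i. 0 \<le> v $ i" for v
  proof (cases "v = 0")
    case True thus ?thesis by simp
  next
    case False
    define w where "w = (1 / norm v) *\<^sub>R v"
    have "w \<in> S" unfolding S_def w_def using nv False by auto
    hence "\<delta> \<le> (X *v w) \<bullet> (X *v w)" using min \<delta>_def by blast
    also have "\<dots> = (1 / norm v)^2 * ((X *v v) \<bullet> (X *v v))"
      unfolding w_def by (simp add: matrix_vector_mult_scaleR power2_eq_square)
    finally show ?thesis using False by (simp add: field_simps)
  qed
  ultimately show ?thesis by blast
qed


lemma posit:
  fixes f :: "real \<Rightarrow> real ^ 'd" and M :: "real ^ 'd ^ 'd" and r :: "real ^ 'd"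
  assumes der: "\<And>t. t \<ge> 0 \<Longrightarrow> (f has_vector_derivative
           (\<chi> i. f t $ i * (r $ i - (\<Sum>j\<in>UNIV. M $ i $ j * f t $ j)))) (at t within {0..})"
    and p0: "f 0 $ i > 0" and t: "t \<ge> 0"
  shows "f t $ i > 0"
proof -
  define g where "g s = r $ i - (\<Sum>j\<in>UNIV. M $ i $ j * f s $ j)" for s
  have der2: "(f has_vector_derivative
           (\<chi> i. f s $ i * (r $ i - (\<Sum>j\<in>UNIV. M $ i $ j * f s $ j)))) (at s within {0..t})"
    if "s \<in> {0..t}" for s
    using der[of s] that by (auto intro: has_vector_derivative_within_subset)
  have cf: "continuous_on {0..t} f" by (rule continuous_on_vector_derivative[OF der2])
  have cg: "continuous_on {0..t} g" unfolding g_def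
    by (intro continuous_intros cf)
  have dfi: "((\<lambda>s. f s $ i) has_real_derivative f s $ i * g s) (at s within {0..t})"
    if "s \<in> {0..t}" for s
    using bounded_linear.has_vector_derivative[OF bounded_linear_vec_nth der2[OF that], of i]
    by (simp add: has_real_derivative_iff_has_vector_derivative g_def)
  define \<phi> where "\<phi> s = f s $ i * exp (- integral {0..s} g)" for s
  have "((\<phi> has_real_derivative 0) (at s within {0..t}))" if s: "s \<in> {0..t}" for s
  proof -
    have "(\<phi> has_real_derivative (f s $ i * g s * exp (- integral {0..s} g)
        + exp (- integral {0..s} g) * (- g s) * f s $ i)) (at s within {0..t})"
    proof -
      have d2: "((\<lambda>s. exp (- integral {0..s} g)) has_real_derivative
          exp (- integral {0..s} g) * (- g s)) (at s within {0..t})"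
        using integral_has_real_derivative[OF cg s] by (auto intro!: derivative_eq_intros)
      show ?thesis unfolding \<phi>_def by (rule DERIV_mult[OF dfi[OF s] d2])
    qed
    thus ?thesis by (simp add: algebra_simps)
  qed
  from has_field_derivative_zero_constant[of "{0..t}" \<phi>, OF _ this]
  obtain c where "\<forall>x\<in>{0..t}. \<phi> x = c" by auto
  hence "\<phi> t = \<phi> 0" using t by auto
  hence "\<phi> t > 0" using p0 by (simp add: \<phi>_def)
  thus ?thesis unfolding \<phi>_def by (simp add: zero_less_mult_iff)
qed



theorem lemma2:
  fixes X :: "real ^ 'd ^ 'n" and y :: "real ^ 'n"
    and C k :: "real ^ 'd"
    and theta :: "real \<Rightarrow> real \<Rightarrow> real ^ 'd"
  defines "M \<equiv> transpose X ** X" and "r \<equiv> transpose X *v y"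
  assumes A1: "\<forall>i. r $ i > 0"
    and A2: "\<forall>i j. i \<noteq> j \<longrightarrow> M $ i $ j \<le> 0"
    and Cpos: "\<forall>i. C $ i > 0" and kpos: "\<forall>i. k $ i > 0"
    and ode: "\<And>\<epsilon> t. \<epsilon> \<in> {0<..1} \<Longrightarrow> t \<ge> 0 \<Longrightarrow>
        (theta \<epsilon> has_vector_derivative
           (\<chi> i. theta \<epsilon> t $ i * (r $ i - (\<Sum>j\<in>UNIV. M $ i $ j * theta \<epsilon> t $ j))))
        (at t within {0..})"
    and init: "\<And>\<epsilon>. \<epsilon> \<in> {0<..1} \<Longrightarrow> theta \<epsilon> 0 = (\<chi> i. C $ i * \<epsilon> powr (k $ i))"
  shows "\<exists>B>0. \<forall>\<epsilon>\<in>{0<..1}. \<forall>t\<ge>0. norm (theta \<epsilon> t) \<le> B"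
proof -
  obtain \<delta> where dpos: "\<delta> > 0" and coe: "\<And>v. (\<forall>i. 0 \<le> v $ i) \<Longrightarrow> \<delta> * (norm v)^2 \<le> (X *v v) \<bullet> (X *v v)"
    using coerc[of X y] A1 unfolding r_def by blast
  obtain K where Kpos: "K > 0" and Kb: "\<And>x. norm (X *v x) \<le> norm x * K"
    using bounded_linear.pos_bounded[OF matrix_vector_mul_bounded_linear[of X]] by blast
  define K0 where "K0 = (norm C * K)^2"
  define B where "B = max 1 ((2 * norm r + K0) / \<delta>)"
  have "norm (theta \<epsilon> t) \<le> B" if e: "\<epsilon> \<in> {0<..1}" and t: "t \<ge> 0" for \<epsilon> t
  proof -
    define \<theta> where "\<theta> = theta \<epsilon>"
    define D where "D s = (\<chi> i. \<theta> s $ i * (r $ i - (\<Sum>j\<in>UNIV. M $ i $ j * \<theta> s $ j)))" for s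
    have der: "\<And>s. s \<ge> 0 \<Longrightarrow> (\<theta> has_vector_derivative D s) (at s within {0..})"
      unfolding \<theta>_def D_def using ode[OF e] by blast
    have th0: "\<theta> 0 = (\<chi> i. C $ i * \<epsilon> powr (k $ i))" unfolding \<theta>_def using init[OF e] .
    have p0: "\<theta> 0 $ i > 0" for i using th0 Cpos e by simp
    have pos: "\<theta> s $ i > 0" if "s \<ge> 0" for s i
      using posit[of \<theta> r M, OF der[unfolded D_def] p0 that] by blast
    define G where "G s = r \<bullet> \<theta> s - ((X *v \<theta> s) \<bullet> (X *v \<theta> s)) / 2" for s
    define E where "E s = r \<bullet> D s - ((X *v \<theta> s) \<bullet> (X *v D s) + (X *v D s) \<bullet> (X *v \<theta> s)) / 2" for s
    have Ederiv: "(G has_real_derivative E s) (at s within {0..t})" if s: "s \<in> {0..t}" for s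
    proof -
      have d: "(\<theta> has_vector_derivative D s) (at s within {0..t})"
        using der[of s] s by (auto intro: has_vector_derivative_within_subset)
      have d1: "((\<lambda>s. r \<bullet> \<theta> s) has_real_derivative r \<bullet> D s) (at s within {0..t})"
        using bounded_linear.has_vector_derivative[OF bounded_linear_inner_right d]
        by (simp add: has_real_derivative_iff_has_vector_derivative)
      have dX: "((\<lambda>s. X *v \<theta> s) has_vector_derivative X *v D s) (at s within {0..t})"
        using bounded_linear.has_vector_derivative[OF matrix_vector_mul_bounded_linear d] .
      have d2: "((\<lambda>s. (X *v \<theta> s) \<bullet> (X *v \<theta> s)) has_real_derivative
          (X *v \<theta> s) \<bullet> (X *v D s) + (X *v D s) \<bullet> (X *v \<theta> s)) (at s within {0..t})"
        using bounded_bilinear.has_vector_derivative[OF bounded_bilinear_inner dX dX]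
        by (simp add: has_real_derivative_iff_has_vector_derivative)
      show ?thesis unfolding G_def E_def
        by (intro DERIV_diff d1 DERIV_cdivide d2)
    qed
    have Enn: "E s \<ge> 0" if s: "s \<in> {0..t}" for s
    proof -
      have "(X *v \<theta> s) \<bullet> (X *v D s) = (M *v \<theta> s) \<bullet> D s"
        unfolding M_def by (simp add: dot_lmul_matrix flip: matrix_vector_mul_assoc)
      hence "E s = (r - M *v \<theta> s) \<bullet> D s"
        unfolding E_def by (simp add: inner_commute inner_diff_left inner_diff_right)
      also have "\<dots> = (\<Sum>i\<in>UNIV. \<theta> s $ i * (r $ i - (\<Sum>j\<in>UNIV. M $ i $ j * \<theta> s $ j))^2)"
        unfolding D_def inner_vec_def
        by (intro sum.cong refl) (simp add: matrix_vector_mult_def power2_eq_square)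
      also have "\<dots> \<ge> 0"
        using pos[of s] s by (intro sum_nonneg mult_nonneg_nonneg) (auto intro: less_imp_le)
      finally show ?thesis .
    qed
    have "G 0 \<le> G t"
    proof -
      from mvt_very_simple[of 0 t G "\<lambda>x h. E x * h"] Ederiv t
      obtain x where x: "x \<in> {0..t}" and "G t - G 0 = E x * t"
        by (auto simp: has_field_derivative_def)
      moreover have "E x * t \<ge> 0" using Enn[OF x] x by simp
      ultimately show ?thesis by simp
    qed
    have nth0: "norm (\<theta> 0) \<le> norm C"
    proof (rule norm_le_componentwise_cart)
      fix i
      have "\<epsilon> powr (k $ i) \<le> 1" using e kpos by (intro powr_le1) (auto intro: less_imp_le)
      moreover have "\<epsilon> powr (k $ i) \<ge> 0" by simp
      ultimately have "C $ i * \<epsilon> powr (k $ i) \<le> C $ i" "C $ i * \<epsilon> powr (k $ i) \<ge> 0"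
        using Cpos mult_left_le[of "\<epsilon> powr (k $ i)" "C $ i"] by (auto intro: less_imp_le) (metis less_imp_le mult_nonneg_nonneg powr_ge_zero)
      thus "norm (\<theta> 0 $ i) \<le> norm (C $ i)" using th0 Cpos[rule_format, of i] by simp
    qed
    have Q0: "(X *v \<theta> 0) \<bullet> (X *v \<theta> 0) \<le> K0"
    proof -
      have "norm (X *v \<theta> 0) \<le> norm C * K"
        using Kb[of "\<theta> 0"] nth0 Kpos by (meson mult_right_mono less_imp_le order_trans)
      hence "(norm (X *v \<theta> 0))^2 \<le> (norm C * K)^2" by (simp add: power_mono)
      thus ?thesis unfolding K0_def by (simp add: power2_norm_eq_inner)
    qed
    have r0: "r \<bullet> \<theta> 0 \<ge> 0" unfolding inner_vec_def
      using A1 p0 by (intro sum_nonneg) (auto intro: less_imp_le)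
    have G0: "G 0 \<ge> - K0 / 2" using Q0 r0 unfolding G_def by simp
    define s where "s = norm (\<theta> t)"
    have "\<delta> * s^2 \<le> (X *v \<theta> t) \<bullet> (X *v \<theta> t)"
      unfolding s_def using coe pos t by (auto intro: less_imp_le)
    also have "\<dots> \<le> 2 * (r \<bullet> \<theta> t) + K0" using G0 \<open>G 0 \<le> G t\<close> unfolding G_def by simp
    also have "r \<bullet> \<theta> t \<le> norm r * s" unfolding s_def by (rule norm_cauchy_schwarz)
    finally have ineq: "\<delta> * s^2 \<le> 2 * (norm r * s) + K0" by simp
    have "s \<le> B"
    proof (cases "s \<le> 1")
      case True thus ?thesis unfolding B_def by simp
    next
      case False
      have K0nn: "K0 \<ge> 0" unfolding K0_def by simp
      have "\<delta> * s * s \<le> (2 * norm r + K0) * s"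
        proof -
        have "K0 * 1 \<le> K0 * s" using False K0nn by (intro mult_left_mono) auto
        thus ?thesis using ineq by (simp add: power2_eq_square algebra_simps)
      qed
      hence "\<delta> * s \<le> 2 * norm r + K0" using False by (simp add: mult_le_cancel_right)
      hence "s \<le> (2 * norm r + K0) / \<delta>" using dpos by (simp add: field_simps)
      thus ?thesis unfolding B_def by simp
    qed
    thus ?thesis unfolding s_def \<theta>_def .
  qed
  moreover have "B > 0" unfolding B_def by simp
  ultimately show ?thesis by blast
qed

end
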